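(* Let $3\le p<n$, let $c\in\mathbb{R}^A$, let $s\in V\setminus\{n\}$, $t\in V\setminus\{0\}$ with $s\neq t$, and let $R\subseteq V\setminus\{s,t,0,n\}$ with $|R|\ge 2$. Suppose that one of the conditions (i)–(iv) below holds, and that $c_{ij}=\beta$ for all arcs $(i,j)$ of some unbalanced 1-tree $H$ on $R$. Then $c_{ij}=\beta$ for all $(i,j)\in A(R)$, and there are $\sigma,\tau$ with $c_{si}=\sigma$ and $c_{it}=\tau$ for all $i\in R$. Conditions: (i) $|R|\ge 5$ and $c_{ik}+c_{kj}=c_{il}+c_{lj}$ for all distinct $i\in R\cup\{s\}$, $j\in R\cup\{t\}$, $k,l\in R$; (ii) $|R|\ge p\ge 4$ and $c(P)$ is constant over all simple directed $(s,t)$-paths with $p$ arcs whose internal nodes lie in $R$; (iii) $|R|=p-1$, $c(P)$ is constant over all simple directed $(s,t)$-paths with $p$ arcs whose internal nodes are exactly the nodes of $R$, and for some $2\le r<p$, $c(P)$ is constant over all simple directed $(s,t)$-paths with $r$ arcs whose $r-1$ internal nodes lie in $R$; (iv) $p=3$, $|R|\ge3$, $c(P)$ is constant over all simple directed $(s,t)$-paths with 3 arcs whose internal nodes lie in $R$, and $c(P)$ is constant over all simple directed $(s,t)$-paths with 2 arcs whose inner node lies in $R$.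
   Context: Let $n$ be a positive integer, $V=\{0,1,\dots,n\}$, and let $D=(V,A)$ be the digraph whose arc set $A$ consists of all ordered pairs $(i,j)$ with $i\neq j$, $i,j\in V$, except that no arc enters node $0$, no arc leaves node $n$, and the arc $(0,n)$ is absent. $c(P)=\sum_{(i,j)\in P}c_{ij}$; $A(R)$ is the set of arcs of $A$ with both endnodes in $R$. A balanced cycle is a simple cycle of the underlying undirected graph (arcs traversed in either direction) that contains the same number of forward and backward arcs. An unbalanced 1-tree on $R$ is a set of arcs of $A(R)$ consisting of a spanning tree $T$ of $R$ (ignoring orientations) plus one further arc $(k,l)$ whose fundamental cycle with respect to $T$ is not balanced. *)

theory Defs
  imports Complex_Main
begin

definition arcs :: "nat \<Rightarrow> (nat \<times> nat) set" where
  "arcs n = {(i,j). i \<le> n \<and> j \<le> n \<and> i \<noteq> j \<and> j \<noteq> 0 \<and> i \<noteq> n \<and> (i,j) \<noteq> (0,n)}"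

definition arcs_in :: "nat \<Rightarrow> nat set \<Rightarrow> (nat \<times> nat) set" where
  "arcs_in n R = {(i,j) \<in> arcs n. i \<in> R \<and> j \<in> R}"

definition steps :: "'a list \<Rightarrow> ('a \<times> 'a) list" where
  "steps xs = zip xs (tl xs)"

definition spanning_tree :: "nat \<Rightarrow> nat set \<Rightarrow> (nat \<times> nat) set \<Rightarrow> bool" where
  "spanning_tree n R T \<longleftrightarrow> T \<subseteq> arcs_in n R \<and> finite R \<and> card T + 1 = card R \<and>
     (\<forall>u\<in>R. \<forall>v\<in>R. (u,v) \<in> (T \<union> T\<inverse>)\<^sup>*)"

definition tree_path :: "(nat \<times> nat) set \<Rightarrow> nat \<Rightarrow> nat \<Rightarrow> nat list \<Rightarrow> bool" where
  "tree_path T k l xs \<longleftrightarrow> xs \<noteq> [] \<and> hd xs = k \<and> last xs = l \<and> distinct xs \<and>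
     (\<forall>e\<in>set (steps xs). e \<in> T \<union> T\<inverse>)"

text \<open>Unbalanced 1-tree on R: spanning tree T plus an arc (k,l) of A(R) whose fundamental
  cycle (tree path k..l followed by arc (k,l) traversed from l back to k, i.e. backward)
  has different numbers of forward and backward arcs.\<close>
definition unbalanced_1tree :: "nat \<Rightarrow> nat set \<Rightarrow> (nat \<times> nat) set \<Rightarrow> bool" where
  "unbalanced_1tree n R H \<longleftrightarrow> (\<exists>T k l xs. spanning_tree n R T \<and> (k,l) \<in> arcs_in n R \<and>
     (k,l) \<notin> T \<and> H = insert (k,l) T \<and> tree_path T k l xs \<and>
     length (filter (\<lambda>e. e \<in> T) (steps xs)) \<noteq>
       length (filter (\<lambda>(a,b). (b,a) \<in> T) (steps xs)) + 1)"

definition dipath :: "nat \<Rightarrow> nat \<Rightarrow> nat \<Rightarrow> nat \<Rightarrow> nat list \<Rightarrow> bool" where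
  "dipath n s t m xs \<longleftrightarrow> length xs = m + 1 \<and> hd xs = s \<and> last xs = t \<and> distinct xs \<and>
     set (steps xs) \<subseteq> arcs n"

definition internal :: "'a list \<Rightarrow> 'a set" where
  "internal xs = set (butlast (tl xs))"

definition cost :: "(nat \<Rightarrow> nat \<Rightarrow> real) \<Rightarrow> nat list \<Rightarrow> real" where
  "cost c xs = sum_list (map (\<lambda>(i,j). c i j) (steps xs))"

definition const_paths :: "nat \<Rightarrow> (nat \<Rightarrow> nat \<Rightarrow> real) \<Rightarrow> nat \<Rightarrow> nat \<Rightarrow> nat \<Rightarrow> nat set \<Rightarrow> bool" where
  "const_paths n c s t m R \<longleftrightarrow> (\<forall>P Q. dipath n s t m P \<and> internal P \<subseteq> R \<and>
      dipath n s t m Q \<and> internal Q \<subseteq> R \<longrightarrow> cost c P = cost c Q)"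

definition const_paths_exact :: "nat \<Rightarrow> (nat \<Rightarrow> nat \<Rightarrow> real) \<Rightarrow> nat \<Rightarrow> nat \<Rightarrow> nat \<Rightarrow> nat set \<Rightarrow> bool" where
  "const_paths_exact n c s t m R \<longleftrightarrow> (\<forall>P Q. dipath n s t m P \<and> internal P = R \<and>
      dipath n s t m Q \<and> internal Q = R \<longrightarrow> cost c P = cost c Q)"

end

theory Submission
  imports Defs
begin


definition good :: "nat \<Rightarrow> nat \<Rightarrow> nat \<Rightarrow> nat set \<Rightarrow> bool" where
  "good n s t R \<longleftrightarrow> s \<le> n \<and> s \<noteq> n \<and> t \<le> n \<and> t \<noteq> 0 \<and> s \<noteq> t \<and> R \<subseteq> {0..n} - {s, t, 0, n}"

lemma steps_Nil[simp]: "steps [] = []" and steps_single[simp]: "steps [a] = []"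
  and steps_Cons2[simp]: "steps (a # b # xs) = (a,b) # steps (b # xs)"
  by (auto simp: steps_def)

lemma steps_Cons: "xs \<noteq> [] \<Longrightarrow> steps (a # xs) = (a, hd xs) # steps xs"
  by (cases xs) auto

lemma steps_snoc: "xs \<noteq> [] \<Longrightarrow> steps (xs @ [b]) = steps xs @ [(last xs, b)]"
proof (induction xs)
  case Nil then show ?case by simp
next
  case (Cons a xs)
  then show ?case by (cases xs) auto
qed

lemma steps_in: "(a,b) \<in> set (steps xs) \<Longrightarrow> a \<in> set xs \<and> b \<in> set xs \<and> (distinct xs \<longrightarrow> a \<noteq> b)"
proof (induction xs rule: induct_list012)
  case 1 then show ?case by simp
next
  case (2 x) then show ?case by simp
next
  case (3 x y zs) then show ?case by auto
qed

lemma cost_Cons2[simp]: "cost c (a # b # xs) = c a b + cost c (b # xs)"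
  by (simp add: cost_def)

lemma cost_single[simp]: "cost c [a] = 0"
  by (simp add: cost_def)

lemma cost_app: "xs \<noteq> [] \<Longrightarrow> ys \<noteq> [] \<Longrightarrow> cost c (xs @ ys) = cost c xs + c (last xs) (hd ys) + cost c ys"
proof (induction xs)
  case Nil then show ?case by simp
next
  case (Cons a xs)
  show ?case
  proof (cases xs)
    case Nil
    then show ?thesis using Cons.prems by (cases ys) auto
  next
    case (Cons b zs)
    then show ?thesis using Cons.IH Cons.prems by simp
  qed
qed

lemma path_ok:
  assumes g: "good n s t R" and d: "distinct L" "set L \<subseteq> R" "L \<noteq> []"
  shows "dipath n s t (length L + 1) (s # L @ [t])" "internal (s # L @ [t]) = set L"
proof -
  have sR: "s \<notin> R" "t \<notin> R" "0 \<notin> R" "n \<notin> R" "\<forall>x\<in>R. x \<le> n" using g by (auto simp: good_def)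
  have g2: "s \<le> n" "s \<noteq> n" "t \<le> n" "t \<noteq> 0" "s \<noteq> t" using g by (auto simp: good_def)
  have st: "steps (s # L @ [t]) = (s, hd L) # steps L @ [(last L, t)]"
    using d(3) by (simp add: steps_Cons steps_snoc)
  have "set (steps (s # L @ [t])) \<subseteq> arcs n"
  proof
    fix e assume "e \<in> set (steps (s # L @ [t]))"
    then consider "e = (s, hd L)" | "e \<in> set (steps L)" | "e = (last L, t)" using st by auto
    then show "e \<in> arcs n"
    proof cases
      case 1
      have "hd L \<in> R" using d by auto
      then have "hd L \<noteq> 0" "hd L \<noteq> n" "hd L \<le> n" "hd L \<noteq> s" using sR by metis+
      then show ?thesis using 1 sR g2 by (auto simp: arcs_def)
    next
      case 2
      obtain a b where e: "e = (a,b)" by force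
      have "a \<in> R" "b \<in> R" "a \<noteq> b" using steps_in[of a b L] 2 e d by auto
      then have "a \<noteq> n" "b \<noteq> 0" "a \<le> n" "b \<le> n" "b \<noteq> n" using sR by metis+
      then show ?thesis using e sR \<open>a \<noteq> b\<close> by (auto simp: arcs_def)
    next
      case 3
      have "last L \<in> R" using d by auto
      then have "last L \<noteq> 0" "last L \<noteq> n" "last L \<le> n" "last L \<noteq> t" using sR by metis+
      then show ?thesis using 3 sR g2 by (auto simp: arcs_def)
    qed
  qed
  moreover have "distinct (s # L @ [t])" using d sR g2 by auto
  ultimately show "dipath n s t (length L + 1) (s # L @ [t])" by (simp add: dipath_def)
  show "internal (s # L @ [t]) = set L" by (simp add: internal_def)
qed

lemma cp_use:
  assumes "const_paths n c s t m R" "good n s t R"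
    "distinct L1" "set L1 \<subseteq> R" "L1 \<noteq> []" "length L1 + 1 = m"
    "distinct L2" "set L2 \<subseteq> R" "L2 \<noteq> []" "length L2 + 1 = m"
  shows "cost c (s # L1 @ [t]) = cost c (s # L2 @ [t])"
  using assms path_ok[of n s t R L1] path_ok[of n s t R L2] unfolding const_paths_def by metis

lemma cpe_use:
  assumes "const_paths_exact n c s t m R" "good n s t R"
    "distinct L1" "set L1 = R" "L1 \<noteq> []" "length L1 + 1 = m"
    "distinct L2" "set L2 = R" "L2 \<noteq> []" "length L2 + 1 = m"
  shows "cost c (s # L1 @ [t]) = cost c (s # L2 @ [t])"
  using assms path_ok[of n s t R L1] path_ok[of n s t R L2] unfolding const_paths_exact_def
  by (metis order_refl)

lemma filler:
  assumes "finite A" "q \<le> card A"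
  shows "\<exists>F. distinct F \<and> set F \<subseteq> A \<and> length F = q"
proof -
  obtain xs where xs: "set xs = A" "distinct xs" using finite_distinct_list[OF assms(1)] by blast
  have "length xs = card A" using xs distinct_card by metis
  then show ?thesis using xs assms(2)
    by (intro exI[of _ "take q xs"]) (auto dest: in_set_takeD)
qed




definition Qprop :: "(nat \<Rightarrow> nat \<Rightarrow> real) \<Rightarrow> nat set \<Rightarrow> bool" where
  "Qprop c R \<longleftrightarrow> (\<forall>i\<in>R. \<forall>j\<in>R. \<forall>k\<in>R. distinct [i,j,k] \<longrightarrow>
     c i j + c j i = c i k + c k i \<and> c i j + c j k + c k i = c i k + c k j + c j i)"

definition Pprop :: "(nat \<Rightarrow> nat \<Rightarrow> real) \<Rightarrow> nat set \<Rightarrow> bool" where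
  "Pprop c R \<longleftrightarrow> (\<exists>\<gamma> a. \<forall>i\<in>R. \<forall>j\<in>R. i \<noteq> j \<longrightarrow> c i j = \<gamma> + a i - a j)"

lemma Q_from_AB:
  assumes A: "\<forall>i\<in>R. \<forall>j\<in>R. \<forall>k\<in>R. \<forall>l\<in>R. distinct [i,j,k,l] \<longrightarrow> c i k + c k j = c i l + c l j"
    and B: "\<forall>j\<in>R. \<forall>k\<in>R. \<forall>l\<in>R. distinct [j,k,l] \<longrightarrow> c s k + c k j = c s l + c l j"
    and fin: "finite R" and card: "card R \<ge> 4"
  shows "Qprop c R"
  unfolding Qprop_def
proof (intro ballI impI)
  fix x y z assume xyz: "x \<in> R" "y \<in> R" "z \<in> R" "distinct [x,y,z]"
  have c3: "card {x,y,z} = 3" using xyz by auto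
  have "\<not> R \<subseteq> {x,y,z}"
  proof
    assume "R \<subseteq> {x,y,z}"
    then have "card R \<le> card {x,y,z}" by (simp add: card_mono)
    then show False using c3 card by linarith
  qed
  then obtain w where w: "w \<in> R" "w \<notin> {x,y,z}" by blast
  have d: "distinct [x,w,y,z]" "distinct [y,x,w,z]" "distinct [x,z,w,y]" "distinct [x,y,w,z]"
      "distinct [z,x,w,y]" "distinct [y,w,x]" "distinct [z,w,x]" using xyz w by auto
  have 1: "c x y + c y w = c x z + c z w" using A xyz w d by blast
  have 2: "c y w + c w x = c y z + c z x" using A xyz w d by blast
  have 3: "c x w + c w z = c x y + c y z" using A xyz w d by blast
  have 4: "c x w + c w y = c x z + c z y" using A xyz w d by blast
  have 5: "c z w + c w x = c z y + c y x" using A xyz w d by blast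
  have 6: "c s w + c w y = c s x + c x y" using B xyz w d by blast
  have 7: "c s w + c w z = c s x + c x z" using B xyz w d by blast
  show "c x y + c y x = c x z + c z x \<and> c x y + c y z + c z x = c x z + c z y + c y x"
    using 1 2 3 4 5 6 7 by linarith
qed

lemma Q_from_H:
  assumes H1: "\<forall>x\<in>R. \<forall>y\<in>R. \<forall>w\<in>R. distinct [x,y,w] \<longrightarrow> c s x + c x y + c y w = c s y + c y x + c x w"
    and H2: "\<forall>x\<in>R. \<forall>y\<in>R. \<forall>w\<in>R. distinct [x,y,w] \<longrightarrow> c w x + c x y + c y t = c w y + c y x + c x t"
    and T2: "\<forall>x\<in>R. \<forall>y\<in>R. c s x + c x t = c s y + c y t"
  shows "Qprop c R"
  unfolding Qprop_def
proof (intro ballI impI)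
  fix x y z assume xyz: "x \<in> R" "y \<in> R" "z \<in> R" "distinct [x,y,z]"
  have d: "distinct [x,y,z]" "distinct [x,z,y]" "distinct [y,z,x]" using xyz by auto
  have 1: "c z x + c x y + c y t = c z y + c y x + c x t" using H2 xyz d by blast
  have 2: "c y x + c x z + c z t = c y z + c z x + c x t" using H2 xyz d by blast
  have 3: "c s x + c x z + c z y = c s z + c z x + c x y" using H1 xyz d by blast
  have 4: "c s x + c x y + c y z = c s y + c y x + c x z" using H1 xyz d by blast
  have 5: "c s y + c y z + c z x = c s z + c z y + c y x" using H1 xyz d by blast
  have 6: "c s x + c x t = c s y + c y t" using T2 xyz by blast
  have 7: "c s x + c x t = c s z + c z t" using T2 xyz by blast
  show "c x y + c y x = c x z + c z x \<and> c x y + c y z + c z x = c x z + c z y + c y x"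
    using 1 2 3 4 5 6 7 by linarith
qed

lemma P_from_Q:
  assumes Q: "Qprop c R"
  shows "Pprop c R"
proof (cases "\<exists>x0\<in>R. \<exists>y0\<in>R. x0 \<noteq> y0")
  case False
  then show ?thesis unfolding Pprop_def by blast
next
  case True
  then obtain x0 y0 where xy: "x0 \<in> R" "y0 \<in> R" "x0 \<noteq> y0" by blast
  have Q1: "c i j + c j i = c i k + c k i" if "i \<in> R" "j \<in> R" "k \<in> R" "distinct [i,j,k]" for i j k
    using Q that unfolding Qprop_def by blast
  have Q2: "c i j + c j k + c k i = c i k + c k j + c j i" if "i \<in> R" "j \<in> R" "k \<in> R" "distinct [i,j,k]" for i j k
    using Q that unfolding Qprop_def by blast
  define \<gamma> where "\<gamma> = (c x0 y0 + c y0 x0) / 2"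
  have S: "c i j + c j i = 2 * \<gamma>" if "i \<in> R" "j \<in> R" "i \<noteq> j" for i j
  proof -
    have "c i j + c j i = c x0 y0 + c y0 x0"
    proof (cases "i = x0")
      case True
      then show ?thesis using Q1[of x0 j y0] that xy by (cases "j = y0") auto
    next
      case False
      have a: "c i j + c j i = c i x0 + c x0 i"
        using Q1[of i j x0] that xy False by (cases "j = x0") auto
      have b: "c x0 i + c i x0 = c x0 y0 + c y0 x0"
        using Q1[of x0 i y0] that xy False by (cases "i = y0") auto
      show ?thesis using a b by linarith
    qed
    then show ?thesis unfolding \<gamma>_def by simp
  qed
  define a where "a i = (if i = x0 then 0 else c i x0 - \<gamma>)" for i
  have "\<forall>i\<in>R. \<forall>j\<in>R. i \<noteq> j \<longrightarrow> c i j = \<gamma> + a i - a j"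
  proof (intro ballI impI)
    fix i j assume ij: "i \<in> R" "j \<in> R" "i \<noteq> j"
    show "c i j = \<gamma> + a i - a j"
    proof (cases "i = x0")
      case True
      then show ?thesis using S[of j x0] ij by (simp add: a_def)
    next
      case False
      show ?thesis
      proof (cases "j = x0")
        case True
        then show ?thesis using False by (simp add: a_def)
      next
        case False2: False
        have "c i j + c j x0 + c x0 i = c i x0 + c x0 j + c j i" using Q2[of i j x0] ij xy False False2 by auto
        moreover have "c i j + c j i = 2*\<gamma>" "c i x0 + c x0 i = 2*\<gamma>" "c j x0 + c x0 j = 2*\<gamma>"
          using S ij xy False False2 by auto
        ultimately show ?thesis using False False2 by (simp add: a_def)
      qed
    qed
  qed
  then show ?thesis unfolding Pprop_def by blast
qed

lemma sum_steps_tele: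
  "xs \<noteq> [] \<Longrightarrow> sum_list (map (\<lambda>(u,v). a u - a v) (steps xs)) = (a (hd xs) - a (last xs) :: real)"
proof (induction xs)
  case Nil then show ?case by simp
next
  case (Cons x xs)
  then show ?case by (cases xs) auto
qed

lemma sum_steps_count:
  fixes a :: "nat \<Rightarrow> real"
  assumes "\<forall>e\<in>set ys. e \<in> T \<union> T\<inverse>"
    and "\<forall>(u,v)\<in>T. a u - a v = \<delta>"
  shows "sum_list (map (\<lambda>(u,v). a u - a v) ys) =
     \<delta> * (real (length (filter (\<lambda>e. e \<in> T) ys)) - real (length (filter (\<lambda>(x,y). (y,x) \<in> T) ys)))"
  using assms(1)
proof (induction ys)
  case Nil then show ?case by simp
next
  case (Cons e ys)
  obtain u v where e: "e = (u,v)" by force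
  have IH: "sum_list (map (\<lambda>(u,v). a u - a v) ys) =
     \<delta> * (real (length (filter (\<lambda>e. e \<in> T) ys)) - real (length (filter (\<lambda>(x,y). (y,x) \<in> T) ys)))"
    using Cons by simp
  have m: "(u,v) \<in> T \<or> (v,u) \<in> T" using Cons.prems e by auto
  have step: "a u - a v = \<delta> * ((if (u,v) \<in> T then 1 else 0) - (if (v,u) \<in> T then 1 else 0))"
  proof -
    have f: "(u,v) \<in> T \<Longrightarrow> a u - a v = \<delta>" using assms(2) by blast
    have b: "(v,u) \<in> T \<Longrightarrow> a v - a u = \<delta>" using assms(2) by blast
    show ?thesis using m f b by (cases "(u,v) \<in> T"; cases "(v,u) \<in> T") auto
  qed
  show ?case using IH step e by (auto simp: algebra_simps)
qed

lemma tree_lemma: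
  assumes P: "Pprop c R" and H: "unbalanced_1tree n R H" and Hb: "\<forall>(i,j)\<in>H. c i j = \<beta>"
  shows "\<forall>i\<in>R. \<forall>j\<in>R. i \<noteq> j \<longrightarrow> c i j = \<beta>"
proof -
  obtain \<gamma> a where ga: "\<forall>i\<in>R. \<forall>j\<in>R. i \<noteq> j \<longrightarrow> c i j = \<gamma> + a i - a j" using P unfolding Pprop_def by blast
  obtain T k l xs where T: "spanning_tree n R T" "(k,l) \<in> arcs_in n R" "(k,l) \<notin> T"
     "H = insert (k,l) T" "tree_path T k l xs"
     "length (filter (\<lambda>e. e \<in> T) (steps xs)) \<noteq> length (filter (\<lambda>(a,b). (b,a) \<in> T) (steps xs)) + 1"
    using H unfolding unbalanced_1tree_def by blast
  define \<delta> where "\<delta> = \<beta> - \<gamma>"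
  have arcR: "i \<in> R \<and> j \<in> R \<and> i \<noteq> j" if "(i,j) \<in> arcs_in n R" for i j
    using that by (auto simp: arcs_in_def arcs_def)
  have TR: "\<forall>(u,v)\<in>T. u \<in> R \<and> v \<in> R \<and> u \<noteq> v" using T(1) arcR unfolding spanning_tree_def by blast
  have Td: "\<forall>(u,v)\<in>T. a u - a v = \<delta>"
  proof (intro ballI, clarify)
    fix u v assume "(u,v) \<in> T"
    then have "c u v = \<beta>" "u \<in> R" "v \<in> R" "u \<noteq> v" using Hb T(4) TR by auto
    then show "a u - a v = \<delta>" using ga unfolding \<delta>_def by force
  qed
  have kl: "a k - a l = \<delta>"
  proof -
    have "c k l = \<beta>" using Hb T(4) by auto
    moreover have "k \<in> R" "l \<in> R" "k \<noteq> l" using arcR T(2) by auto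
    ultimately show ?thesis using ga unfolding \<delta>_def by force
  qed
  have tp: "xs \<noteq> []" "hd xs = k" "last xs = l" "\<forall>e\<in>set (steps xs). e \<in> T \<union> T\<inverse>"
    using T(5) unfolding tree_path_def by auto
  have "a k - a l = \<delta> * (real (length (filter (\<lambda>e. e \<in> T) (steps xs))) -
          real (length (filter (\<lambda>(x,y). (y,x) \<in> T) (steps xs))))"
    using sum_steps_tele[of xs a] sum_steps_count[OF tp(4) Td] tp by simp
  then have "\<delta> * (real (length (filter (\<lambda>e. e \<in> T) (steps xs))) -
          real (length (filter (\<lambda>(x,y). (y,x) \<in> T) (steps xs))) - 1) = 0"
    using kl by (simp add: algebra_simps)
  moreover have "real (length (filter (\<lambda>e. e \<in> T) (steps xs))) -
          real (length (filter (\<lambda>(x,y). (y,x) \<in> T) (steps xs))) - 1 \<noteq> 0"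
    using T(6) by linarith
  ultimately have d0: "\<delta> = 0" by simp
  have conn: "\<forall>u\<in>R. \<forall>v\<in>R. (u,v) \<in> (T \<union> T\<inverse>)\<^sup>*" using T(1) unfolding spanning_tree_def by blast
  have eq: "a u = a v" if "(u,v) \<in> (T \<union> T\<inverse>)\<^sup>*" for u v
    using that
  proof (induction rule: rtrancl_induct)
    case base then show ?case by simp
  next
    case (step y z)
    then have "a y = a z" using Td d0 by auto
    then show ?case using step by simp
  qed
  show ?thesis
  proof (intro ballI impI)
    fix i j assume "i \<in> R" "j \<in> R" "i \<noteq> j"
    then show "c i j = \<beta>" using ga eq conn d0 unfolding \<delta>_def by force
  qed
qed



lemma ABC_from_paths:
  assumes cp: "const_paths n c s t q R" and g: "good n s t R" and fin: "finite R"
    and q: "4 \<le> q" "q \<le> card R"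
  shows "\<forall>i\<in>R. \<forall>j\<in>R. \<forall>k\<in>R. \<forall>l\<in>R. distinct [i,j,k,l] \<longrightarrow> c i k + c k j = c i l + c l j"
    and "\<forall>j\<in>R. \<forall>k\<in>R. \<forall>l\<in>R. distinct [j,k,l] \<longrightarrow> c s k + c k j = c s l + c l j"
    and "\<forall>i\<in>R. \<forall>k\<in>R. \<forall>l\<in>R. distinct [i,k,l] \<longrightarrow> c i k + c k t = c i l + c l t"
proof (intro ballI impI)
  fix i j k l assume h: "i \<in> R" "j \<in> R" "k \<in> R" "l \<in> R" "distinct [i,j,k,l]"
  have "card (R - {i,j,k,l}) = card R - card {i,j,k,l}" using h fin by (intro card_Diff_subset) auto
  moreover have "card {i,j,k,l} = 4" using h by auto
  ultimately have "q - 4 \<le> card (R - {i,j,k,l})" using q by linarith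
  then obtain F where F: "distinct F" "set F \<subseteq> R - {i,j,k,l}" "length F = q - 4"
    using filler[of "R - {i,j,k,l}" "q - 4"] fin by auto
  have "cost c (s # (i#k#j#F) @ [t]) = cost c (s # (i#l#j#F) @ [t])"
    using F h q by (intro cp_use[OF cp g]) auto
  then show "c i k + c k j = c i l + c l j" by simp
next
  show "\<forall>j\<in>R. \<forall>k\<in>R. \<forall>l\<in>R. distinct [j,k,l] \<longrightarrow> c s k + c k j = c s l + c l j"
  proof (intro ballI impI)
    fix j k l assume h: "j \<in> R" "k \<in> R" "l \<in> R" "distinct [j,k,l]"
    have "card (R - {j,k,l}) = card R - card {j,k,l}" using h fin by (intro card_Diff_subset) auto
    moreover have "card {j,k,l} = 3" using h by auto
    ultimately have "q - 3 \<le> card (R - {j,k,l})" using q by linarith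
    then obtain F where F: "distinct F" "set F \<subseteq> R - {j,k,l}" "length F = q - 3"
      using filler[of "R - {j,k,l}" "q - 3"] fin by auto
    have "cost c (s # (k#j#F) @ [t]) = cost c (s # (l#j#F) @ [t])"
      using F h q by (intro cp_use[OF cp g]) auto
    then show "c s k + c k j = c s l + c l j" by simp
  qed
next
  show "\<forall>i\<in>R. \<forall>k\<in>R. \<forall>l\<in>R. distinct [i,k,l] \<longrightarrow> c i k + c k t = c i l + c l t"
  proof (intro ballI impI)
    fix i k l assume h: "i \<in> R" "k \<in> R" "l \<in> R" "distinct [i,k,l]"
    have "card (R - {i,k,l}) = card R - card {i,k,l}" using h fin by (intro card_Diff_subset) auto
    moreover have "card {i,k,l} = 3" using h by auto
    ultimately have "q - 3 \<le> card (R - {i,k,l})" using q by linarith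
    then obtain F where F: "distinct F" "set F \<subseteq> R - {i,k,l}" "length F = q - 3"
      using filler[of "R - {i,k,l}" "q - 3"] fin by auto
    have "cost c (s # (F @ [i,k]) @ [t]) = cost c (s # (F @ [i,l]) @ [t])"
      using F h q by (intro cp_use[OF cp g]) auto
    moreover have "s # (F @ [i,k]) @ [t] = (s # F) @ [i,k,t]" "s # (F @ [i,l]) @ [t] = (s # F) @ [i,l,t]" by auto
    ultimately have "cost c ((s # F) @ [i,k,t]) = cost c ((s # F) @ [i,l,t])" by simp
    then show "c i k + c k t = c i l + c l t" using cost_app[of "s#F" "[i,k,t]" c] cost_app[of "s#F" "[i,l,t]" c] by simp
  qed
qed




lemma T3_from:
  assumes cp: "const_paths n c s t 3 R" and g: "good n s t R"
  shows "\<forall>a\<in>R. \<forall>b\<in>R. \<forall>a'\<in>R. \<forall>b'\<in>R. a \<noteq> b \<and> a' \<noteq> b' \<longrightarrow>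
     c s a + c a b + c b t = c s a' + c a' b' + c b' t"
proof (intro ballI impI)
  fix a b a' b' assume h: "a \<in> R" "b \<in> R" "a' \<in> R" "b' \<in> R" "a \<noteq> b \<and> a' \<noteq> b'"
  have "cost c (s # [a,b] @ [t]) = cost c (s # [a',b'] @ [t])"
    using h by (intro cp_use[OF cp g]) auto
  then show "c s a + c a b + c b t = c s a' + c a' b' + c b' t" by simp
qed

lemma T2_from:
  assumes cp: "const_paths n c s t 2 R" and g: "good n s t R"
  shows "\<forall>a\<in>R. \<forall>a'\<in>R. c s a + c a t = c s a' + c a' t"
proof (intro ballI)
  fix a a' assume h: "a \<in> R" "a' \<in> R"
  have "cost c (s # [a] @ [t]) = cost c (s # [a'] @ [t])"
    using h by (intro cp_use[OF cp g]) auto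
  then show "c s a + c a t = c s a' + c a' t" by simp
qed


lemma H0_from:
  assumes cp: "const_paths_exact n c s t 3 R" and g: "good n s t R"
    and R: "R = {x,y}" "x \<noteq> y"
  shows "c s x + c x y + c y t = c s y + c y x + c x t"
proof -
  have "cost c (s # [x,y] @ [t]) = cost c (s # [y,x] @ [t])"
    using R by (intro cpe_use[OF cp g]) auto
  then show ?thesis by simp
qed

lemma P_from_T3:
  assumes T3: "\<forall>a\<in>R. \<forall>b\<in>R. \<forall>a'\<in>R. \<forall>b'\<in>R. a \<noteq> b \<and> a' \<noteq> b' \<longrightarrow>
     c s a + c a b + c b t = c s a' + c a' b' + c b' t"
    and G: "\<forall>a\<in>R. \<forall>a'\<in>R. c s a + c a t = c s a' + c a' t"
  shows "Pprop c R"
proof (cases "\<exists>x0\<in>R. \<exists>y0\<in>R. x0 \<noteq> y0")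
  case False
  then show ?thesis unfolding Pprop_def by (intro exI[of _ 0] exI[of _ "\<lambda>_. 0"]) auto
next
  case True
  then obtain x0 y0 where xy: "x0 \<in> R" "y0 \<in> R" "x0 \<noteq> y0" by blast
  define K where "K = c s x0 + c x0 y0 + c y0 t"
  define g where "g = c s x0 + c x0 t"
  have "\<forall>i\<in>R. \<forall>j\<in>R. i \<noteq> j \<longrightarrow> c i j = (K - g) + c i t - c j t"
  proof (intro ballI impI)
    fix i j assume "i \<in> R" "j \<in> R" "i \<noteq> j"
    have 1: "c s i + c i j + c j t = K" unfolding K_def
      by (rule T3[rule_format]) (use \<open>i \<in> R\<close> \<open>j \<in> R\<close> \<open>i \<noteq> j\<close> xy in auto)
    have 2: "c s i + c i t = g" unfolding g_def
      by (rule G[rule_format]) (use \<open>i \<in> R\<close> xy in auto)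
    from 1 2 show "c i j = (K - g) + c i t - c j t" by linarith
  qed
  then show ?thesis unfolding Pprop_def by (intro exI[of _ "K - g"] exI[of _ "\<lambda>i. c i t"])
qed




lemma H_from:
  assumes cp: "const_paths_exact n c s t p R" and g: "good n s t R" and fin: "finite R"
    and cR: "card R + 1 = p"
  shows "\<forall>x\<in>R. \<forall>y\<in>R. \<forall>w\<in>R. distinct [x,y,w] \<longrightarrow> c s x + c x y + c y w = c s y + c y x + c x w"
    and "\<forall>x\<in>R. \<forall>y\<in>R. \<forall>w\<in>R. distinct [x,y,w] \<longrightarrow> c w x + c x y + c y t = c w y + c y x + c x t"
proof (intro ballI impI)
  fix x y w assume h: "x \<in> R" "y \<in> R" "w \<in> R" "distinct [x,y,w]"
  obtain W where W: "set W = R - {x,y,w}" "distinct W" using finite_distinct_list[of "R - {x,y,w}"] fin by auto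
  have L: "set (x#y#w#W) = R" "distinct (x#y#w#W)" "set (y#x#w#W) = R" "distinct (y#x#w#W)"
    using W h by auto
  have "length (x#y#w#W) = card R" "length (y#x#w#W) = card R" using L distinct_card by metis+
  then have "cost c (s # (x#y#w#W) @ [t]) = cost c (s # (y#x#w#W) @ [t])"
    using L cR by (intro cpe_use[OF cp g]) auto
  then show "c s x + c x y + c y w = c s y + c y x + c x w" by simp
next
  show "\<forall>x\<in>R. \<forall>y\<in>R. \<forall>w\<in>R. distinct [x,y,w] \<longrightarrow> c w x + c x y + c y t = c w y + c y x + c x t"
  proof (intro ballI impI)
    fix x y w assume h: "x \<in> R" "y \<in> R" "w \<in> R" "distinct [x,y,w]"
    obtain W where W: "set W = R - {x,y,w}" "distinct W" using finite_distinct_list[of "R - {x,y,w}"] fin by auto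
    have L: "set (W@[w,x,y]) = R" "distinct (W@[w,x,y])" "set (W@[w,y,x]) = R" "distinct (W@[w,y,x])"
      using W h by auto
    have "length (W@[w,x,y]) = card R" "length (W@[w,y,x]) = card R" using L distinct_card by metis+
    then have "cost c (s # (W@[w,x,y]) @ [t]) = cost c (s # (W@[w,y,x]) @ [t])"
      using L cR by (intro cpe_use[OF cp g]) auto
    moreover have "s # (W@[w,x,y]) @ [t] = (s # W) @ [w,x,y,t]" "s # (W@[w,y,x]) @ [t] = (s # W) @ [w,y,x,t]" by auto
    ultimately have "cost c ((s # W) @ [w,x,y,t]) = cost c ((s # W) @ [w,y,x,t])" by simp
    then show "c w x + c x y + c y t = c w y + c y x + c x t" using cost_app[of "s#W" "[w,x,y,t]" c] cost_app[of "s#W" "[w,y,x,t]" c] by simp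
  qed
qed


lemma third:
  assumes "finite R" "card R \<ge> 3" "k \<in> R" "l \<in> R"
  shows "\<exists>j\<in>R. j \<noteq> k \<and> j \<noteq> l"
proof (rule ccontr)
  assume "\<not> ?thesis"
  then have "R \<subseteq> {k,l}" by blast
  then have "card R \<le> card {k,l}" by (simp add: card_mono)
  moreover have "card {k,l} \<le> 2" by (simp add: card_insert_le_m1)
  ultimately show False using assms by linarith
qed

lemma SB_from_BC:
  fixes c :: "nat \<Rightarrow> nat \<Rightarrow> real"
  assumes B: "\<forall>j\<in>R. \<forall>k\<in>R. \<forall>l\<in>R. distinct [j,k,l] \<longrightarrow> c s k + c k j = c s l + c l j"
    and C: "\<forall>i\<in>R. \<forall>k\<in>R. \<forall>l\<in>R. distinct [i,k,l] \<longrightarrow> c i k + c k t = c i l + c l t"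
    and fin: "finite R" and card: "card R \<ge> 3"
  shows "(\<forall>i\<in>R. \<forall>j\<in>R. i \<noteq> j \<longrightarrow> c i j = \<beta>) \<longrightarrow> (\<forall>k\<in>R. \<forall>l\<in>R. c s k = c s l \<and> c k t = c l t)"
proof (intro impI ballI)
  fix k l assume all: "\<forall>i\<in>R. \<forall>j\<in>R. i \<noteq> j \<longrightarrow> c i j = \<beta>" and kl: "k \<in> R" "l \<in> R"
  show "c s k = c s l \<and> c k t = c l t"
  proof (cases "k = l")
    case True then show ?thesis by simp
  next
    case False
    obtain j where j: "j \<in> R" "j \<noteq> k" "j \<noteq> l" using third[OF fin card kl] by blast
    have d: "distinct [j,k,l]" using j False by auto
    have 1: "c s k + c k j = c s l + c l j" using B j kl d by blast
    have 2: "c j k + c k t = c j l + c l t" using C j kl d by blast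
    have 3: "c k j = \<beta>" "c l j = \<beta>" "c j k = \<beta>" "c j l = \<beta>" using all j kl by auto
    show ?thesis using 1 2 3 by (intro conjI) linarith+
  qed
qed

lemma BC_from_T3:
  fixes c :: "nat \<Rightarrow> nat \<Rightarrow> real"
  assumes T3: "\<forall>a\<in>R. \<forall>b\<in>R. \<forall>a'\<in>R. \<forall>b'\<in>R. a \<noteq> b \<and> a' \<noteq> b' \<longrightarrow>
     c s a + c a b + c b t = c s a' + c a' b' + c b' t"
  shows "\<forall>j\<in>R. \<forall>k\<in>R. \<forall>l\<in>R. distinct [j,k,l] \<longrightarrow> c s k + c k j = c s l + c l j"
    and "\<forall>i\<in>R. \<forall>k\<in>R. \<forall>l\<in>R. distinct [i,k,l] \<longrightarrow> c i k + c k t = c i l + c l t"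
proof (intro ballI impI)
  fix j k l assume h: "j \<in> R" "k \<in> R" "l \<in> R" "distinct [j,k,l]"
  have "c s k + c k j + c j t = c s l + c l j + c j t"
    by (rule T3[rule_format]) (use h in auto)
  then show "c s k + c k j = c s l + c l j" by linarith
next
  show "\<forall>i\<in>R. \<forall>k\<in>R. \<forall>l\<in>R. distinct [i,k,l] \<longrightarrow> c i k + c k t = c i l + c l t"
  proof (intro ballI impI)
    fix i k l assume h: "i \<in> R" "k \<in> R" "l \<in> R" "distinct [i,k,l]"
    have "c s i + c i k + c k t = c s i + c i l + c l t"
      by (rule T3[rule_format]) (use h in auto)
    then show "c i k + c k t = c i l + c l t" by linarith
  qed
qed

lemma G_from_T3H1:
  fixes c :: "nat \<Rightarrow> nat \<Rightarrow> real"
  assumes T3: "\<forall>a\<in>R. \<forall>b\<in>R. \<forall>a'\<in>R. \<forall>b'\<in>R. a \<noteq> b \<and> a' \<noteq> b' \<longrightarrow>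
     c s a + c a b + c b t = c s a' + c a' b' + c b' t"
    and H1: "\<forall>x\<in>R. \<forall>y\<in>R. \<forall>w\<in>R. distinct [x,y,w] \<longrightarrow> c s x + c x y + c y w = c s y + c y x + c x w"
    and fin: "finite R" and card: "card R \<ge> 3"
  shows "\<forall>a\<in>R. \<forall>a'\<in>R. c s a + c a t = c s a' + c a' t"
proof (intro ballI)
  fix x y assume xy: "x \<in> R" "y \<in> R"
  show "c s x + c x t = c s y + c y t"
  proof (cases "x = y")
    case True then show ?thesis by simp
  next
    case False
    obtain w where w: "w \<in> R" "w \<noteq> x" "w \<noteq> y" using third[OF fin card xy] by blast
    have 0: "c s x + c x y + c y w = c s y + c y x + c x w" using H1 xy w False by auto
    have 1: "c s x + c x y + c y t = c s y + c y w + c w t"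
      by (rule T3[rule_format]) (use xy w False in auto)
    have 2: "c s y + c y x + c x t = c s y + c y w + c w t"
      by (rule T3[rule_format]) (use xy w False in auto)
    have 3: "c s x + c x w + c w t = c s y + c y w + c w t"
      by (rule T3[rule_format]) (use xy w False in auto)
    show ?thesis using 0 1 2 3 by linarith
  qed
qed

theorem corollary5:
  fixes n p s t :: nat and c :: "nat \<Rightarrow> nat \<Rightarrow> real" and R :: "nat set" and \<beta> :: real
  assumes "3 \<le> p" "p < n"
    and "s \<le> n" "s \<noteq> n" "t \<le> n" "t \<noteq> 0" "s \<noteq> t"
    and "R \<subseteq> {0..n} - {s, t, 0, n}" "card R \<ge> 2"
    and conds:
      "(card R \<ge> 5 \<and> (\<forall>i\<in>R \<union> {s}. \<forall>j\<in>R \<union> {t}. \<forall>k\<in>R. \<forall>l\<in>R.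
            distinct [i, j, k, l] \<longrightarrow> c i k + c k j = c i l + c l j))
       \<or> (card R \<ge> p \<and> p \<ge> 4 \<and> const_paths n c s t p R)
       \<or> (card R = p - 1 \<and> const_paths_exact n c s t p R \<and>
            (\<exists>r. 2 \<le> r \<and> r < p \<and> const_paths n c s t r R))
       \<or> (p = 3 \<and> card R \<ge> 3 \<and> const_paths n c s t 3 R \<and> const_paths n c s t 2 R)"
    and H: "\<exists>H. unbalanced_1tree n R H \<and> (\<forall>(i,j)\<in>H. c i j = \<beta>)"
  shows "(\<forall>(i,j)\<in>arcs_in n R. c i j = \<beta>) \<and> (\<exists>\<sigma> \<tau>. \<forall>i\<in>R. c s i = \<sigma> \<and> c i t = \<tau>)"
proof -
  have g: "good n s t R" using assms(3-8) unfolding good_def by blast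
  have fin: "finite R" using assms(8) finite_subset by (metis finite_Diff finite_atLeastAtMost finite_subset)
  have sR: "s \<notin> R" "t \<notin> R" using assms(8) by auto
  obtain H0 where H0: "unbalanced_1tree n R H0" "\<forall>(i,j)\<in>H0. c i j = \<beta>" using H by blast
  have key: "Pprop c R \<and> ((\<forall>i\<in>R. \<forall>j\<in>R. i \<noteq> j \<longrightarrow> c i j = \<beta>) \<longrightarrow> (\<forall>k\<in>R. \<forall>l\<in>R. c s k = c s l \<and> c k t = c l t))"
    using conds
  proof (elim disjE conjE exE)
    assume c5: "card R \<ge> 5" and X: "\<forall>i\<in>R \<union> {s}. \<forall>j\<in>R \<union> {t}. \<forall>k\<in>R. \<forall>l\<in>R.
            distinct [i, j, k, l] \<longrightarrow> c i k + c k j = c i l + c l j"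
    have A: "\<forall>i\<in>R. \<forall>j\<in>R. \<forall>k\<in>R. \<forall>l\<in>R. distinct [i,j,k,l] \<longrightarrow> c i k + c k j = c i l + c l j"
      by (intro ballI impI, rule X[rule_format]) auto
    have B: "\<forall>j\<in>R. \<forall>k\<in>R. \<forall>l\<in>R. distinct [j,k,l] \<longrightarrow> c s k + c k j = c s l + c l j"
    proof (intro ballI impI)
      fix j k l assume h: "j \<in> R" "k \<in> R" "l \<in> R" "distinct [j,k,l]"
      then have "distinct [s,j,k,l]" using sR by auto
      then show "c s k + c k j = c s l + c l j" by (intro X[rule_format]) (use h in auto)
    qed
    have C: "\<forall>i\<in>R. \<forall>k\<in>R. \<forall>l\<in>R. distinct [i,k,l] \<longrightarrow> c i k + c k t = c i l + c l t"
    proof (intro ballI impI)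
      fix i k l assume h: "i \<in> R" "k \<in> R" "l \<in> R" "distinct [i,k,l]"
      then have "distinct [i,t,k,l]" using sR by auto
      then show "c i k + c k t = c i l + c l t" by (intro X[rule_format]) (use h in auto)
    qed
    have c4: "card R \<ge> 4" "card R \<ge> 3" using c5 by auto
    show ?thesis using P_from_Q[OF Q_from_AB[OF A B fin c4(1)]] SB_from_BC[OF B C fin c4(2)] by (intro conjI)
  next
    assume "card R \<ge> p" "p \<ge> 4" "const_paths n c s t p R"
    note abc = ABC_from_paths[OF \<open>const_paths n c s t p R\<close> g fin \<open>p \<ge> 4\<close> \<open>card R \<ge> p\<close>]
    have c4: "card R \<ge> 4" "card R \<ge> 3" using \<open>card R \<ge> p\<close> \<open>p \<ge> 4\<close> by auto
    show ?thesis using P_from_Q[OF Q_from_AB[OF abc(1) abc(2) fin c4(1)]] SB_from_BC[OF abc(2) abc(3) fin c4(2)] by (intro conjI)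
  next
    fix r assume cR: "card R = p - 1" and ex: "const_paths_exact n c s t p R"
      and r: "2 \<le> r" "r < p" and cpr: "const_paths n c s t r R"
    have cR1: "card R + 1 = p" using cR assms(1) by linarith
    have rle: "r \<le> card R" using r cR1 by linarith
    consider "r \<ge> 4" | "r = 3" | "r = 2" using r by linarith
    then show ?thesis
    proof cases
      case 1
      note abc = ABC_from_paths[OF cpr g fin 1 rle]
      have c4: "card R \<ge> 4" "card R \<ge> 3" using 1 rle by auto
      show ?thesis using P_from_Q[OF Q_from_AB[OF abc(1) abc(2) fin c4(1)]] SB_from_BC[OF abc(2) abc(3) fin c4(2)] by (intro conjI)
    next
      case 2
      have cp3: "const_paths n c s t 3 R" using cpr 2 by simp
      note T3 = T3_from[OF cp3 g]
      have c3: "card R \<ge> 3" using rle 2 by simp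
      note H1 = H_from(1)[OF ex g fin cR1]
      have G: "\<forall>a\<in>R. \<forall>a'\<in>R. c s a + c a t = c s a' + c a' t" using G_from_T3H1[OF T3 H1 fin c3] .
      note bc = BC_from_T3[OF T3]
      show ?thesis using P_from_T3[OF T3 G] SB_from_BC[OF bc fin c3] by (intro conjI)
    next
      case 3
      have cp2: "const_paths n c s t 2 R" using cpr 3 by simp
      note T2 = T2_from[OF cp2 g]
      show ?thesis
      proof (cases "card R \<ge> 3")
        case True
        note H1 = H_from(1)[OF ex g fin cR1]
        note H2 = H_from(2)[OF ex g fin cR1]
        have P: "Pprop c R" using P_from_Q[OF Q_from_H[OF H1 H2 T2]] .
        have SB: "(\<forall>i\<in>R. \<forall>j\<in>R. i \<noteq> j \<longrightarrow> c i j = \<beta>) \<longrightarrow> (\<forall>k\<in>R. \<forall>l\<in>R. c s k = c s l \<and> c k t = c l t)"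
        proof (intro impI ballI)
          fix k l assume all: "\<forall>i\<in>R. \<forall>j\<in>R. i \<noteq> j \<longrightarrow> c i j = \<beta>" and kl: "k \<in> R" "l \<in> R"
          show "c s k = c s l \<and> c k t = c l t"
          proof (cases "k = l")
            case True then show ?thesis by simp
          next
            case False
            obtain w where w: "w \<in> R" "w \<noteq> k" "w \<noteq> l" using third[OF fin True kl] by blast
            have d: "distinct [k,l,w]" using w False by auto
            have 1: "c s k + c k l + c l w = c s l + c l k + c k w" using H1 kl w d by blast
            have 2: "c w k + c k l + c l t = c w l + c l k + c k t" using H2 kl w d by blast
            have 3: "c k l = \<beta>" "c l k = \<beta>" "c l w = \<beta>" "c k w = \<beta>" "c w k = \<beta>" "c w l = \<beta>"
              using all w kl False by auto
            show ?thesis using 1 2 3 by (intro conjI) linarith+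
          qed
        qed
        show ?thesis using P SB by blast
      next
        case False
        then have c2: "card R = 2" using assms(9) by linarith
        then obtain x y where xy: "R = {x,y}" "x \<noteq> y" by (meson card_2_iff)
        have p3: "p = 3" using cR1 c2 by simp
        have Q: "Qprop c R" unfolding Qprop_def
        proof (intro ballI impI)
          fix i j k assume ijk: "i \<in> R" "j \<in> R" "k \<in> R" "distinct [i,j,k]"
          have "card {i,j,k} \<le> card R" using ijk fin by (intro card_mono) auto
          moreover have "card {i,j,k} = 3" using ijk(4) by simp
          ultimately have False using c2 by linarith
          then show "c i j + c j i = c i k + c k i \<and> c i j + c j k + c k i = c i k + c k j + c j i" by blast
        qed
        have ex3: "const_paths_exact n c s t 3 R" using ex p3 by simp
        have h0: "c s x + c x y + c y t = c s y + c y x + c x t"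
          using H0_from[OF ex3 g xy] .
        have xR: "x \<in> R" "y \<in> R" using xy(1) by blast+
        have t2: "c s x + c x t = c s y + c y t" using T2[rule_format, OF xR] .
        have SB: "(\<forall>i\<in>R. \<forall>j\<in>R. i \<noteq> j \<longrightarrow> c i j = \<beta>) \<longrightarrow> (\<forall>k\<in>R. \<forall>l\<in>R. c s k = c s l \<and> c k t = c l t)"
        proof (intro impI ballI)
          fix k l assume all: "\<forall>i\<in>R. \<forall>j\<in>R. i \<noteq> j \<longrightarrow> c i j = \<beta>" and kl: "k \<in> R" "l \<in> R"
          have "c x y = \<beta>" "c y x = \<beta>" using all[rule_format, OF xR(1) xR(2)] all[rule_format, OF xR(2) xR(1)] xy(2) by auto
          then have e: "c s x = c s y" "c x t = c y t" using h0 t2 by linarith+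
          have "k = x \<or> k = y" "l = x \<or> l = y" using kl xy(1) by blast+
          then show "c s k = c s l \<and> c k t = c l t" using e by (elim disjE) auto
        qed
        show ?thesis using P_from_Q[OF Q] SB by blast
      qed
    qed
  next
    assume p3: "p = 3" and c3: "card R \<ge> 3" and cp3: "const_paths n c s t 3 R" and cp2: "const_paths n c s t 2 R"
    note T3 = T3_from[OF cp3 g]
    note T2 = T2_from[OF cp2 g]
    note bc = BC_from_T3[OF T3]
    show ?thesis using P_from_T3[OF T3 T2] SB_from_BC[OF bc fin c3] by (intro conjI)
  qed
  have allb: "\<forall>i\<in>R. \<forall>j\<in>R. i \<noteq> j \<longrightarrow> c i j = \<beta>"
    using tree_lemma[OF conjunct1[OF key] H0(1) H0(2)] .
  have SB: "\<forall>k\<in>R. \<forall>l\<in>R. c s k = c s l \<and> c k t = c l t" using key allb by blast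
  obtain x0 where x0: "x0 \<in> R" using assms(9) by (metis card.empty ex_in_conv not_numeral_le_zero)
  have part1: "\<forall>(i,j)\<in>arcs_in n R. c i j = \<beta>"
    using allb by (auto simp: arcs_in_def arcs_def)
  have part2: "\<forall>i\<in>R. c s i = c s x0 \<and> c i t = c x0 t" using SB x0 by blast
  show ?thesis using part1 part2 by blast
qed


end
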